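(* Let $M>2$, $p_M=\frac{M+2}{M-2}$, $m\ge1$, and for $p\in(1,p_M)$ let $v_p$ be the unique solution in $H^1_{0,M}$ of $-(t^{M-1}v')'=t^{M-1}|v|^{p-1}v$ on $(0,1)$, $v'(0)=0$, $v(1)=0$, with exactly $m$ nodal zones and $v_p(0)>0$, and let $f_p(r)=pr^2|v_p(r)|^{p-1}$. Then there exist $C>0$ and a left neighborhood of $p_M$ such that $0\le f_p(r)\le C$ for all $r\in[0,1]$ and all $p$ in that neighborhood.
   Context: $H^1_{0,M}$: measurable $v$ on $(0,1)$ with $\int_0^1t^{M-1}(v^2+|v'|^2)<\infty$, $v(1)=0$. *)

theory Defs
  imports "HOL-Analysis.Analysis"
begin

definition pM :: "real \<Rightarrow> real" where
  "pM M = (M + 2) / (M - 2)"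

text \<open>v is a solution in H^1_{0,M} of -(t^{M-1} v')' = t^{M-1} |v|^{p-1} v on (0,1),
  v'(0) = 0, v(1) = 0.  Solutions of this ODE are classical, so v is taken
  differentiable on [0,1] with derivative v', t^{M-1} v' differentiable on (0,1),
  and the weighted H^1 norm finite.\<close>
definition radial_sol :: "real \<Rightarrow> real \<Rightarrow> (real \<Rightarrow> real) \<Rightarrow> bool" where
  "radial_sol M p v \<longleftrightarrow>
     (\<exists>v'. (\<forall>r\<in>{0..1}. (v has_real_derivative v' r) (at r within {0..1}))
        \<and> v' 0 = 0 \<and> v 1 = 0
        \<and> (\<forall>r\<in>{0<..<1}. ((\<lambda>t. t powr (M - 1) * v' t) has_real_derivative
               - (r powr (M - 1) * \<bar>v r\<bar> powr (p - 1) * v r)) (at r))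
        \<and> (\<lambda>t. t powr (M - 1) * ((v t)\<^sup>2 + (v' t)\<^sup>2)) integrable_on {0<..<1})"

definition nodal_zones :: "(real \<Rightarrow> real) \<Rightarrow> nat" where
  "nodal_zones v = card (components {r \<in> {0..<1}. v r \<noteq> 0})"

definition fp :: "real \<Rightarrow> (real \<Rightarrow> real) \<Rightarrow> real \<Rightarrow> real" where
  "fp p v r = p * r\<^sup>2 * \<bar>v r\<bar> powr (p - 1)"

end

theory Submission
  imports Defs
begin


lemma first_zero:
  fixes u :: "real \<Rightarrow> real"
  assumes cont: "continuous_on {x0..1} u" and pos: "u x0 > 0" and z1: "u 1 = 0" and x0: "x0 < 1"
  shows "\<exists>b. x0 < b \<and> b \<le> 1 \<and> u b = 0 \<and> (\<forall>r. x0 \<le> r \<and> r < b \<longrightarrow> u r > 0)"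
proof -
  let ?Z = "{r\<in>{x0..1}. u r = 0}"
  have cl: "closed ?Z"
    using continuous_closed_preimage_constant[OF cont closed_atLeastAtMost] by simp
  have "bounded ?Z" by (rule bounded_subset[of "{x0..1}"]) auto
  hence cpt: "compact ?Z" using cl by (simp add: compact_eq_bounded_closed)
  have ne: "?Z \<noteq> {}" using x0 z1 by auto
  obtain b where b: "b \<in> ?Z" "\<And>y. y \<in> ?Z \<Longrightarrow> b \<le> y"
    using compact_attains_inf[OF cpt ne] by blast
  have bx: "b \<noteq> x0" using b(1) pos by auto
  show ?thesis
  proof (intro exI conjI allI impI)
    show "x0 < b" using b(1) bx by auto
    show "b \<le> 1" "u b = 0" using b(1) by auto
    fix r assume r: "x0 \<le> r \<and> r < b"
    show "u r > 0"
    proof (rule ccontr)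
      assume "\<not> u r > 0"
      hence "u r \<le> 0" by simp
      have "r \<noteq> x0" using pos \<open>u r \<le> 0\<close> by auto
      hence "x0 < r" using r by auto
      have "\<exists>y\<ge>x0. y \<le> r \<and> u y = 0"
        using IVT2'[of u r 0 x0] \<open>u r \<le> 0\<close> pos \<open>x0 < r\<close> continuous_on_subset[OF cont, of "{x0..r}"] r b(1)
        by auto
      then obtain y where "x0 \<le> y" "y \<le> r" "u y = 0" by blast
      hence "y \<in> ?Z" using r b(1) by auto
      thus False using b(2) r \<open>y \<le> r\<close> by fastforce
    qed
  qed
qed

lemma powr_pm1_mult:
  fixes x p :: real
  assumes "x \<ge> 0" "p > 1"
  shows "x powr (p-1) * x = x powr p"
proof (cases "x = 0")
  case True thus ?thesis by simp
next
  case False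
  hence "x > 0" using assms by simp
  thus ?thesis by (simp add: powr_add[symmetric] powr_diff)
qed

locale zsol =
  fixes M p :: real and u u' :: "real \<Rightarrow> real"
  assumes M2: "M > 2" and p1: "p > 1" and e1pos: "M - 2*p/(p-1) > 0"
  and der: "\<And>r. 0<r \<Longrightarrow> r<1 \<Longrightarrow> (u has_real_derivative u' r) (at r)"
  and phider0: "\<And>r. 0<r \<Longrightarrow> r<1 \<Longrightarrow> ((\<lambda>t. t powr (M-1) * u' t) has_real_derivative
               - (r powr (M - 1) * \<bar>u r\<bar> powr (p - 1) * u r)) (at r)"
  and cont: "continuous_on {0..1} u"
begin

definition phi where "phi t = t powr (M-1) * u' t"

lemma phider: "0<r \<Longrightarrow> r<1 \<Longrightarrow> (phi has_real_derivative - (r powr (M - 1) * \<bar>u r\<bar> powr (p - 1) * u r)) (at r)"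
  using phider0 unfolding phi_def[abs_def] by blast

lemma u'_phi: "0 < r \<Longrightarrow> u' r = phi r / r powr (M-1)"
  by (simp add: phi_def)

lemma phi_cont:
  assumes "0 < s" "t < 1" shows "continuous_on {s..t} phi"
proof (rule DERIV_atLeastAtMost_imp_continuous_on)
  fix x assume "s \<le> x" "x \<le> t"
  thus "\<exists>y. (phi has_real_derivative y) (at x)" using assms phider[of x] by auto
qed

lemma u_cont: "0 \<le> s \<Longrightarrow> t \<le> 1 \<Longrightarrow> continuous_on {s..t} u"
  by (rule continuous_on_subset[OF cont]) auto

lemma phi_strict_dec:
  assumes "0 < s" "s < t" "t < 1" "\<And>r. s < r \<Longrightarrow> r < t \<Longrightarrow> u r > 0"
  shows "phi t < phi s"
proof (rule DERIV_neg_imp_decreasing_open[OF assms(2) _ phi_cont])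
  fix x assume x: "s < x" "x < t"
  have ux: "u x > 0" using assms(4) x by auto
  have "x powr (M-1) > 0" using x assms by simp
  moreover have "\<bar>u x\<bar> powr (p - 1) > 0" using ux by simp
  ultimately have "- (x powr (M - 1) * \<bar>u x\<bar> powr (p - 1) * u x) < 0" using ux by simp
  thus "\<exists>y. (phi has_real_derivative y) (at x) \<and> y < 0" using phider[of x] x assms by auto
qed (use assms in auto)

lemma phi_dec:
  assumes "0 < s" "s \<le> t" "t < 1" "\<And>r. s < r \<Longrightarrow> r < t \<Longrightarrow> u r \<ge> 0"
  shows "phi t \<le> phi s"
proof (rule DERIV_nonpos_imp_decreasing_open[OF assms(2) _ phi_cont])
  fix x assume x: "s < x" "x < t"
  have ux: "u x \<ge> 0" using assms(4) x by auto
  have "x powr (M-1) > 0" using x assms by simp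
  moreover have "\<bar>u x\<bar> powr (p - 1) \<ge> 0" using ux by simp
  ultimately have "- (x powr (M - 1) * \<bar>u x\<bar> powr (p - 1) * u x) \<le> 0" using ux by simp
  thus "\<exists>y. (phi has_real_derivative y) (at x) \<and> y \<le> 0" using phider[of x] x assms by auto
qed (use assms in auto)

lemma u_dec:
  assumes "0 \<le> s" "s \<le> t" "t \<le> 1" "\<And>r. s < r \<Longrightarrow> r < t \<Longrightarrow> phi r \<le> 0"
  shows "u t \<le> u s"
proof (rule DERIV_nonpos_imp_decreasing_open[OF assms(2) _ u_cont])
  fix x assume x: "s < x" "x < t"
  have "u' x \<le> 0" using assms(4)[OF x] u'_phi[of x] x assms by (simp add: divide_nonpos_pos)
  thus "\<exists>y. (u has_real_derivative y) (at x) \<and> y \<le> 0" using der[of x] x assms by auto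
qed (use assms in auto)

lemma u_inc:
  assumes "0 \<le> s" "s \<le> t" "t \<le> 1" "\<And>r. s < r \<Longrightarrow> r < t \<Longrightarrow> phi r \<ge> 0"
  shows "u s \<le> u t"
proof (rule DERIV_nonneg_imp_increasing_open[OF assms(2) _ u_cont])
  fix x assume x: "s < x" "x < t"
  have "u' x \<ge> 0" using assms(4)[OF x] u'_phi[of x] x assms by simp
  thus "\<exists>y. (u has_real_derivative y) (at x) \<and> y \<ge> 0" using der[of x] x assms by auto
qed (use assms in auto)


lemma phi_not_away:
  assumes d0: "(u has_real_derivative u' 0) (at 0 within {0..1})" and u'0: "u' 0 = 0"
  and r0: "0 < r0" "r0 \<le> 1" and bpos: "\<beta> > 0" and sig: "\<sigma> = 1 \<or> \<sigma> = -1"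
  shows "\<not> (\<forall>s. 0 < s \<and> s < r0 \<longrightarrow> \<sigma> * phi s \<ge> \<beta>)"
proof
  assume H: "\<forall>s. 0 < s \<and> s < r0 \<longrightarrow> \<sigma> * phi s \<ge> \<beta>"
  have "\<forall>e>0. \<exists>d>0. \<forall>y\<in>{0..1}. norm (y - 0) < d \<longrightarrow> norm (u y - u 0 - u' 0 * (y - 0)) \<le> e * norm (y - 0)"
    using d0 unfolding has_field_derivative_def has_derivative_within_alt by blast
  then obtain d where d: "d > 0" "\<And>y. y \<in> {0..1} \<Longrightarrow> norm (y - 0) < d \<Longrightarrow> norm (u y - u 0 - u' 0 * (y - 0)) \<le> (\<beta>/4) * norm (y - 0)"
    using bpos by (metis divide_pos_pos zero_less_numeral)
  define s where "s = min d r0 / 2"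
  have s: "0 < s" "s < d" "s < r0" "s < 1" using d r0 by (auto simp: s_def)
  have e1: "\<bar>u s - u 0\<bar> \<le> (\<beta>/4) * s" using d(2)[of s] s u'0 by auto
  have e2: "\<bar>u (s/2) - u 0\<bar> \<le> (\<beta>/4) * (s/2)" using d(2)[of "s/2"] s u'0 by auto
  obtain xi where xi: "s/2 < xi" "xi < s" "u s - u (s/2) = (s - s/2) * u' xi"
    using MVT2[of "s/2" s u u'] der s by force
  have xpos: "xi > 0" "xi < 1" using xi s by auto
  have pw: "xi powr (M-1) \<le> 1"
    using powr_mono2[of "M-1" xi 1] xpos M2 by simp
  have pwpos: "xi powr (M-1) > 0" using xpos by simp
  have "\<sigma> * phi xi \<ge> \<beta>" using H xi s by auto
  hence "\<sigma> * u' xi \<ge> \<beta>"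
  proof -
    assume a: "\<sigma> * phi xi \<ge> \<beta>"
    have "\<sigma> * u' xi = (\<sigma> * phi xi) / xi powr (M-1)" using u'_phi[of xi] xpos by simp
    also have "\<dots> \<ge> \<beta> / xi powr (M-1)" using a pwpos by (simp add: divide_right_mono)
    also have "\<beta> / xi powr (M-1) \<ge> \<beta>" using pw pwpos bpos by (simp add: le_divide_eq)
    finally show ?thesis by simp
  qed
  hence "(s/2) * (\<sigma> * u' xi) \<ge> (s/2) * \<beta>" using s by (intro mult_left_mono) auto
  moreover have "\<sigma> * (u s - u (s/2)) = (s/2) * (\<sigma> * u' xi)" using xi(3) by (simp add: algebra_simps)
  ultimately have "\<sigma> * (u s - u (s/2)) \<ge> (s/2) * \<beta>" by linarith
  moreover have "\<sigma> * (u s - u (s/2)) \<le> \<bar>u s - u (s/2)\<bar>" using sig by auto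
  moreover have "\<bar>u s - u (s/2)\<bar> \<le> (\<beta>/4) * s + (\<beta>/4) * (s/2)" using e1 e2 by linarith
  ultimately have "(s/2) * \<beta> \<le> (\<beta>/4) * s + (\<beta>/4) * (s/2)" by linarith
  thus False using bpos s by (simp add: field_simps)
qed

end



context zsol begin

lemma desc_D2:
  assumes c: "0 \<le> c" "c < r" "r < b" "b \<le> 1"
  and upos: "\<forall>x. c \<le> x \<and> x < b \<longrightarrow> u x > 0"
  and phineg: "\<forall>x. c < x \<and> x < b \<longrightarrow> phi x \<le> 0"
  and big: "r\<^sup>2 > (2 * 2 powr (2/M)) * c\<^sup>2"
  shows "r\<^sup>2 * u r powr (p-1) \<le> 8*M/(p-1)"
proof -
  have Mpos: "M > 0" using M2 by simp
  have dec: "\<And>s t. c \<le> s \<Longrightarrow> s \<le> t \<Longrightarrow> t \<le> b \<Longrightarrow> u t \<le> u s"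
    using u_dec phineg c by auto
  define s0 where "s0 = r / sqrt 2"
  have sq2: "sqrt 2 > 1" by simp
  have s0: "0 < s0" "s0 < r" "s0\<^sup>2 = r\<^sup>2 / 2" using c sq2 by (auto simp: s0_def power_divide divide_less_eq)
  have "(1::real) \<le> 2 powr (2/M)" using Mpos by (intro ge_one_powr_ge_zero) auto
  hence "c\<^sup>2 \<le> c\<^sup>2 * 2 powr (2/M)" by (simp add: mult_le_cancel_left1)
  moreover have "2 * (c\<^sup>2 * 2 powr (2/M)) < 2 * s0\<^sup>2" using big s0(3) by (simp add: mult.assoc mult.commute)
  ultimately have "c\<^sup>2 < s0\<^sup>2" by linarith
  hence s0c: "c < s0" using s0 c by (intro power_less_imp_less_base[of c 2 s0]) auto
  have key: "u' t \<le> - (u t powr p) * t / (2*M)" if t: "s0 \<le> t" "t \<le> r" for t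
  proof -
    define s1 where "s1 = t * 2 powr (-1/M)"
    have tpos: "t > 0" "t < 1" using t s0 c by auto
    have "2 powr (-1/M) < 2 powr 0" by (rule powr_less_mono) (use Mpos in auto)
    hence q: "2 powr (-1/M) < 1" "2 powr (-1/M) > 0" by auto
    have s1: "0 < s1" "s1 < t" using tpos q by (auto simp: s1_def)
    have "s1\<^sup>2 = t\<^sup>2 * (2 powr (-1/M))\<^sup>2" by (simp add: s1_def power_mult_distrib)
    also have "(2 powr (-1/M))\<^sup>2 = 2 powr (-1/M + -1/M)"
      by (simp add: power2_eq_square powr_add[symmetric])
    also have "\<dots> = 1 / 2 powr (2/M)" by (simp add: powr_minus_divide[symmetric])
    finally have s1sq: "s1\<^sup>2 = t\<^sup>2 / 2 powr (2/M)" by simp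
    have "t\<^sup>2 \<ge> s0\<^sup>2" using t s0 by (intro power_mono) auto
    hence "s1\<^sup>2 \<ge> r\<^sup>2 / (2 * 2 powr (2/M))" using s1sq s0 by (simp add: divide_right_mono field_simps)
    hence "r\<^sup>2 \<le> (s1\<^sup>2) * (2 * 2 powr (2/M))" by (simp add: field_simps)
    hence "c\<^sup>2 * (2 * 2 powr (2/M)) < s1\<^sup>2 * (2 * 2 powr (2/M))" using big by (simp only: mult.commute[of "c\<^sup>2"])
    hence "s1\<^sup>2 > c\<^sup>2" by (rule mult_right_less_imp_less) simp
    hence s1c: "s1 > c" using s1 c by (intro power_less_imp_less_base[of c 2 s1]) auto
    have s1M: "s1 powr M = t powr M / 2"
    proof -
      have "s1 powr M = t powr M * (2 powr (-1/M)) powr M" by (simp add: s1_def powr_mult)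
      also have "(2 powr (-1/M)) powr M = 2 powr (-1)" using Mpos by (simp add: powr_powr)
      also have "(2::real) powr (-1) = 1/2" by (simp add: powr_minus_divide)
      finally show ?thesis by simp
    qed
    define h where "h \<tau> = phi \<tau> + (u t powr p) * \<tau> powr M / M" for \<tau>
    have "h t \<le> h s1"
    proof (rule DERIV_nonpos_imp_nonincreasing[of s1 t h])
      show "s1 \<le> t" using s1 by simp
      fix x assume x: "s1 \<le> x" "x \<le> t"
      have xp: "0 < x" "x < 1" using x s1 tpos by auto
      have ux: "u x \<ge> u t" using dec[of x t] x s1c c t s0 by auto
      have utpos: "u t > 0" using upos t s0 s0c c by auto
      have d: "(h has_real_derivative - (x powr (M - 1) * \<bar>u x\<bar> powr (p - 1) * u x) + (u t powr p) * (M * x powr (M-1)) / M) (at x)"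
      proof -
        have dp: "((\<lambda>z. z powr M) has_real_derivative M * x powr (M-1)) (at x)"
          by (rule has_real_derivative_powr) (use xp in auto)
        have "((\<lambda>z. u t powr p * z powr M / M) has_real_derivative u t powr p * (M * x powr (M-1)) / M) (at x)"
          using DERIV_cdivide[OF DERIV_cmult[OF dp], of "u t powr p" M] by simp
        thus ?thesis unfolding h_def[abs_def] using DERIV_add[OF phider[OF xp]] by blast
      qed
      have e: "\<bar>u x\<bar> powr (p - 1) * u x = u x powr p" using ux utpos powr_pm1_mult[of "u x" p] p1 by simp
      have f: "u t powr p \<le> u x powr p" using ux utpos p1 by (intro powr_mono2) auto
      have "- (x powr (M - 1) * \<bar>u x\<bar> powr (p - 1) * u x) + (u t powr p) * (M * x powr (M-1)) / M
            = x powr (M-1) * (u t powr p - u x powr p)" using e Mpos by (simp add: algebra_simps)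
      also have "\<dots> \<le> 0" using f xp by (simp add: mult_nonneg_nonpos)
      finally show "\<exists>y. (h has_real_derivative y) (at x) \<and> y \<le> 0" using d by blast
    qed
    hence "phi t \<le> phi s1 + (u t powr p) * (s1 powr M - t powr M) / M"
      by (simp add: h_def algebra_simps add_divide_distrib diff_divide_distrib)
    moreover have "phi s1 \<le> 0" using phineg s1c s1 t c by auto
    ultimately have "phi t \<le> - (u t powr p) * (t powr M) / (2*M)" using s1M by (simp add: field_simps)
    moreover have "t powr M = t powr (M-1) * t" using tpos by (simp add: powr_diff)
    ultimately have "phi t \<le> - ((u t powr p) * t / (2*M)) * t powr (M-1)" by (simp add: field_simps)
    thus ?thesis using u'_phi[of t] tpos by (simp add: divide_le_eq)
  qed
  define g where "g \<tau> = u \<tau> powr (1-p) - (p-1) * \<tau>\<^sup>2 / (4*M)" for \<tau>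
  have "g s0 \<le> g r"
  proof (rule DERIV_nonneg_imp_nondecreasing[of s0 r g])
    show "s0 \<le> r" using s0 by simp
    fix x assume x: "s0 \<le> x" "x \<le> r"
    have xp: "0 < x" "x < 1" using x s0 c by auto
    have ux: "u x > 0" using upos x s0 s0c c by auto
    have d: "(g has_real_derivative (1-p) * u x powr (1 - p - of_nat 1) * u' x - (p-1) * (2 * x) / (4*M)) (at x)"
      unfolding g_def[abs_def]
      using Mpos by (intro derivative_intros DERIV_fun_powr der xp ux) (auto intro!: derivative_eq_intros)
    have k: "u' x \<le> - (u x powr p) * x / (2*M)" using key x by auto
    have pp: "u x powr (- p) * u x powr p = 1" using ux by (simp add: powr_add[symmetric])
    have "(1-p) * u x powr (1 - p - of_nat 1) * u' x = (p-1) * u x powr (-p) * (- u' x)" by (simp add: algebra_simps)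
    also have "\<dots> \<ge> (p-1) * u x powr (-p) * ((u x powr p) * x / (2*M))"
      using k p1 ux by (intro mult_left_mono) auto
    finally have "(1-p) * u x powr (1 - p - of_nat 1) * u' x \<ge> (p-1) * x / (2*M)"
      using pp by (simp add: field_simps)
    moreover have "(p-1) * (2 * x) / (4*M) = (p-1) * x / (2*M)" by simp
    ultimately have "(1-p) * u x powr (1 - p - of_nat 1) * u' x - (p-1) * (2 * x) / (4*M) \<ge> 0" by linarith
    thus "\<exists>y. (g has_real_derivative y) (at x) \<and> y \<ge> 0" using d by blast
  qed
  hence "u s0 powr (1-p) - (p-1) * s0\<^sup>2 / (4*M) \<le> u r powr (1-p) - (p-1) * r\<^sup>2 / (4*M)"
    by (simp add: g_def)
  moreover have "(p-1) * (r\<^sup>2 - s0\<^sup>2) / (4*M) = (p-1) * r\<^sup>2 / (4*M) - (p-1) * s0\<^sup>2 / (4*M)"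
    by (simp add: right_diff_distrib diff_divide_distrib)
  ultimately have "u r powr (1-p) \<ge> u s0 powr (1-p) + (p-1) * (r\<^sup>2 - s0\<^sup>2) / (4*M)" by linarith
  moreover have "u s0 powr (1-p) > 0" using upos[rule_format, of s0] s0 s0c c by auto
  moreover have "r\<^sup>2 - s0\<^sup>2 = r\<^sup>2/2" using s0(3) by simp
  hence "(p-1) * (r\<^sup>2 - s0\<^sup>2) / (4*M) = (p-1) * r\<^sup>2 / (8*M)" by simp
  ultimately have "u r powr (1-p) > (p-1) * r\<^sup>2 / (8*M)" by linarith
  moreover have ur: "u r > 0" using upos[rule_format, of r] c by auto
  moreover have "u r powr (1-p) = 1 / u r powr (p-1)" using ur by (simp add: powr_minus_divide[symmetric])
  moreover have "u r powr (p-1) > 0" using ur by auto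
  ultimately show ?thesis using Mpos p1 by (simp add: field_simps)
qed

lemma desc_bound:
  assumes c: "0 \<le> c" "c < b" "b \<le> 1"
  and upos: "\<forall>x. c \<le> x \<and> x < b \<longrightarrow> u x > 0" and ub: "u b = 0"
  and phineg: "\<forall>x. c < x \<and> x < b \<longrightarrow> phi x \<le> 0"
  and B1: "B \<ge> 8*M/(p-1)" and B2: "B \<ge> (2 * 2 powr (2/M)) * (c\<^sup>2 * u c powr (p-1))"
  and r: "c \<le> r" "r \<le> b"
  shows "r\<^sup>2 * \<bar>u r\<bar> powr (p-1) \<le> B"
proof -
  have Mpos: "M > 0" using M2 by simp
  have Bpos: "B > 0" using B1 Mpos p1 by (smt (verit) divide_pos_pos)
  show ?thesis
  proof (cases "r = b")
    case True thus ?thesis using ub Bpos by simp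
  next
    case False
    hence rb: "r < b" using r by simp
    have ur: "u r > 0" using upos rb r by auto
    show ?thesis
    proof (cases "c < r \<and> r\<^sup>2 > (2 * 2 powr (2/M)) * c\<^sup>2")
      case True
      hence "r\<^sup>2 * u r powr (p-1) \<le> 8*M/(p-1)" using desc_D2[of c r b] c rb upos phineg by auto
      thus ?thesis using ur B1 by simp
    next
      case False
      have K1: "(1::real) \<le> 2 * 2 powr (2/M)"
      proof -
        have "(1::real) \<le> 2 powr (2/M)" using Mpos by (intro ge_one_powr_ge_zero) auto
        thus ?thesis by simp
      qed
      have rsq: "r\<^sup>2 \<le> (2 * 2 powr (2/M)) * c\<^sup>2"
      proof (cases "c < r")
        case True thus ?thesis using False by auto
      next
        case False
        hence "r = c" using r by simp
        thus ?thesis using K1 by (simp add: mult_le_cancel_right1)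
      qed
      have "u r \<le> u c" using u_dec[of c r] c r rb phineg by auto
      hence "u r powr (p-1) \<le> u c powr (p-1)" using ur p1 by (intro powr_mono2) auto
      hence "r\<^sup>2 * u r powr (p-1) \<le> ((2 * 2 powr (2/M)) * c\<^sup>2) * u c powr (p-1)"
        using rsq by (intro mult_mono) auto
      thus ?thesis using B2 ur by (simp add: mult.assoc)
    qed
  qed
qed

lemma desc_D4:
  assumes c: "0 \<le> c" "c < b" "b < 1"
  and upos: "\<forall>x. c \<le> x \<and> x < b \<longrightarrow> u x > 0" and ub: "u b = 0"
  and phineg: "\<forall>x. c < x \<and> x < b \<longrightarrow> phi x \<le> 0"
  and B1: "B \<ge> 8*M/(p-1)" and B2: "B \<ge> (2 * 2 powr (2/M)) * (c\<^sup>2 * u c powr (p-1))"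
  and lim: "\<forall>\<eta>>0. \<exists>s. c \<le> s \<and> s < b \<and> 0 < s \<and> - phi s < \<eta>"
  shows "phi b < 0" and "b powr (2/(p-1) + 1) * \<bar>u' b\<bar> \<le> B powr (p/(p-1)) / (M - 2*p/(p-1))"
proof -
  have Mpos: "M > 0" using M2 by simp
  have Bpos: "B > 0" using B1 Mpos p1 by (smt (verit) divide_pos_pos)
  define m where "m = (c + b) / 2"
  have m: "c < m" "m < b" "0 < m" using c by (auto simp: m_def)
  have "phi b < phi m" using phi_strict_dec[of m b] m c upos by auto
  moreover have "phi m \<le> 0" using phineg m by auto
  ultimately show phib: "phi b < 0" by simp
  define e1 where "e1 = M - 2*p/(p-1)"
  have e1: "e1 > 0" using e1pos by (simp add: e1_def)
  define A where "A = B powr (p/(p-1)) / e1"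
  define h where "h \<tau> = - phi \<tau> - A * \<tau> powr e1" for \<tau>
  have hb: "h b \<le> 0"
  proof (rule ccontr)
    assume "\<not> h b \<le> 0"
    hence "h b > 0" by simp
    then obtain s where s: "c \<le> s" "s < b" "0 < s" "- phi s < h b" using lim by blast
    have "h b \<le> h s"
    proof (rule DERIV_nonpos_imp_nonincreasing[of s b h])
      show "s \<le> b" using s by simp
      fix x assume x: "s \<le> x" "x \<le> b"
      have xp: "0 < x" "x < 1" using x s c by auto
      have uxnn: "u x \<ge> 0" using upos[rule_format, of x] ub x s by (cases "x = b") auto
      have d: "(h has_real_derivative (x powr (M - 1) * \<bar>u x\<bar> powr (p - 1) * u x) - A * (e1 * x powr (e1 - 1))) (at x)"
      proof -
        have dp: "((\<lambda>z. z powr e1) has_real_derivative e1 * x powr (e1-1)) (at x)"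
          by (rule has_real_derivative_powr) (use xp in auto)
        show ?thesis unfolding h_def[abs_def]
          using DERIV_diff[OF DERIV_minus[OF phider[OF xp]] DERIV_cmult[OF dp, of A]] by simp
      qed
      have T: "x\<^sup>2 * \<bar>u x\<bar> powr (p-1) \<le> B"
        using desc_bound[of c b B x] c upos ub phineg B1 B2 x s by auto
      have up: "\<bar>u x\<bar> powr (p - 1) * u x = u x powr p" using uxnn powr_pm1_mult[of "u x" p] p1 by simp
      have x2: "x\<^sup>2 = x powr 2" using xp by simp
      have "u x powr (p-1) \<le> B / x\<^sup>2" using T uxnn xp by (simp add: field_simps)
      hence "(u x powr (p-1)) powr (p/(p-1)) \<le> (B / x\<^sup>2) powr (p/(p-1))"
        using p1 by (intro powr_mono2) auto
      moreover have "(u x powr (p-1)) powr (p/(p-1)) = u x powr p" using p1 by (simp add: powr_powr)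
      moreover have "(B / x\<^sup>2) powr (p/(p-1)) = B powr (p/(p-1)) / x powr (2*p/(p-1))"
      proof -
        have "x\<^sup>2 powr (p/(p-1)) = (x powr 2) powr (p/(p-1))" using x2 by simp
        also have "\<dots> = x powr (2*p/(p-1))" by (simp add: powr_powr)
        finally show ?thesis using Bpos xp by (simp add: powr_divide)
      qed
      ultimately have up2: "u x powr p \<le> B powr (p/(p-1)) / x powr (2*p/(p-1))" by simp
      have "x powr (M - 1) * u x powr p \<le> x powr (M-1) * (B powr (p/(p-1)) / x powr (2*p/(p-1)))"
        using up2 xp by (intro mult_left_mono) auto
      also have "\<dots> = B powr (p/(p-1)) * (x powr (M-1) / x powr (2*p/(p-1)))" by simp
      also have "x powr (M-1) / x powr (2*p/(p-1)) = x powr (e1 - 1)"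
        using xp by (simp add: e1_def powr_diff[symmetric] algebra_simps)
      also have "B powr (p/(p-1)) * x powr (e1 - 1) = A * (e1 * x powr (e1 - 1))"
        using e1 by (simp add: A_def)
      finally have "(x powr (M - 1) * \<bar>u x\<bar> powr (p - 1) * u x) - A * (e1 * x powr (e1 - 1)) \<le> 0"
        using up by (simp add: mult.assoc)
      thus "\<exists>y. (h has_real_derivative y) (at x) \<and> y \<le> 0" using d by blast
    qed
    moreover have "h s \<le> - phi s" using s e1 Bpos by (simp add: h_def A_def)
    ultimately show False using s by simp
  qed
  have bpos: "b > 0" using c by simp
  have "phi b / b powr (M-1) < 0" using phib bpos by (simp add: divide_neg_pos)
  hence "\<bar>u' b\<bar> = - phi b / b powr (M-1)" using u'_phi[OF bpos] phib by (simp add: abs_of_neg)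
  hence "b powr (2/(p-1) + 1) * \<bar>u' b\<bar> = (- phi b) * (b powr (2/(p-1) + 1) / b powr (M-1))" by simp
  also have "\<dots> \<le> (A * b powr e1) * (b powr (2/(p-1) + 1) / b powr (M-1))"
    using hb bpos by (intro mult_right_mono) (auto simp: h_def)
  also have "(A * b powr e1) * (b powr (2/(p-1) + 1) / b powr (M-1)) = A * b powr (e1 + (2/(p-1) + 1) - (M-1))"
    using bpos by (simp add: powr_add powr_diff power2_eq_square)
  also have "e1 + (2/(p-1) + 1) - (M-1) = 0"
  proof -
    have "2/(p-1) - 2*p/(p-1) = (2 - 2*p)/(p-1)" by (simp add: diff_divide_distrib)
    also have "\<dots> = -2" using p1 by (simp add: field_simps)
    finally show ?thesis unfolding e1_def by linarith
  qed
  finally show "b powr (2/(p-1) + 1) * \<bar>u' b\<bar> \<le> B powr (p/(p-1)) / (M - 2*p/(p-1))"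
    using bpos by (simp add: A_def e1_def)
qed

end


definition AA :: "real \<Rightarrow> real \<Rightarrow> real" where
  "AA p D = max (2 powr (p+4)) ((2 powr (4/(p-1) + p + 3) * D\<^sup>2) powr ((p-1)/(p+1)))"

context zsol begin

lemma asc_bound:
  assumes a: "0 < a" "a < c" "c < 1" and ua: "u a = 0"
  and upos: "\<forall>x. a < x \<and> x \<le> c \<longrightarrow> u x > 0" and phic: "phi c = 0"
  and Da: "a powr (2/(p-1)+1) * \<bar>u' a\<bar> \<le> D"
  shows "c\<^sup>2 * u c powr (p-1) \<le> AA p D"
proof -
  have Mpos: "M > 0" using M2 by simp
  define V where "V = u c"
  define L where "L = c - a"
  define mid where "mid = (a + c) / 2"
  have V: "V > 0" using upos a by (auto simp: V_def)
  have L: "L > 0" using a by (simp add: L_def)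
  have mid: "a < mid" "mid < c" "mid - a = L/2" "c - mid = L/2" using a by (auto simp: mid_def L_def field_simps)
  have unn: "\<And>x. a \<le> x \<Longrightarrow> x \<le> c \<Longrightarrow> u x \<ge> 0"
  proof -
    fix x assume "a \<le> x" "x \<le> c"
    thus "u x \<ge> 0" using upos[rule_format, of x] ua by (cases "x = a") auto
  qed
  have phinn: "\<And>x. a \<le> x \<Longrightarrow> x \<le> c \<Longrightarrow> phi x \<ge> 0"
  proof -
    fix x assume x: "a \<le> x" "x \<le> c"
    have "phi c \<le> phi x" by (rule phi_dec) (use x a unn in auto)
    thus "phi x \<ge> 0" using phic by simp
  qed
  have u'eq: "\<And>x. 0 < x \<Longrightarrow> u' x = phi x / x powr (M-1)" using u'_phi by simp
  have u'nn: "\<And>x. a \<le> x \<Longrightarrow> x \<le> c \<Longrightarrow> u' x \<ge> 0" using phinn u'eq a by simp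
  have u'dec: "\<And>s t. a \<le> s \<Longrightarrow> s \<le> t \<Longrightarrow> t \<le> c \<Longrightarrow> u' t \<le> u' s"
  proof -
    fix s t assume st: "a \<le> s" "s \<le> t" "t \<le> c"
    have sp: "s > 0" "t > 0" using st a by auto
    have "phi t \<le> phi s" using phi_dec[of s t] st a unn by auto
    have pw: "s powr (M-1) \<le> t powr (M-1)" using st sp M2 by (intro powr_mono2) auto
    have "u' t = phi t / t powr (M-1)" using u'eq sp by simp
    also have "\<dots> \<le> phi t / s powr (M-1)" using pw phinn[of t] st sp by (intro divide_left_mono) auto
    also have "\<dots> \<le> phi s / s powr (M-1)" using \<open>phi t \<le> phi s\<close> sp by (intro divide_right_mono) auto
    also have "\<dots> = u' s" using u'eq sp by simp
    finally show "u' t \<le> u' s" .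
  qed
  have uinc: "\<And>s t. a \<le> s \<Longrightarrow> s \<le> t \<Longrightarrow> t \<le> c \<Longrightarrow> u s \<le> u t"
  proof -
    fix s t assume st: "a \<le> s" "s \<le> t" "t \<le> c"
    show "u s \<le> u t" by (rule u_inc) (use st a phinn in auto)
  qed
  have derx: "\<And>x. a \<le> x \<Longrightarrow> x \<le> c \<Longrightarrow> (u has_real_derivative u' x) (at x)" using der a by auto
  have d1: "\<And>x. a \<le> x \<Longrightarrow> x \<le> mid \<Longrightarrow> (u has_real_derivative u' x) (at x)" using derx mid by auto
  have d2: "\<And>x. mid \<le> x \<Longrightarrow> x \<le> c \<Longrightarrow> (u has_real_derivative u' x) (at x)" using derx mid by auto
  obtain x1 where x1: "a < x1" "x1 < mid" "u mid - u a = (mid - a) * u' x1"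
    using MVT2[of a mid u u', OF mid(1) d1] by blast
  obtain x2 where x2: "mid < x2" "x2 < c" "u c - u mid = (c - mid) * u' x2"
    using MVT2[of mid c u u', OF mid(2) d2] by blast
  have "u' x2 \<le> u' x1" using u'dec x1 x2 by simp
  hence "(L/2) * u' x2 \<le> (L/2) * u' x1" using L by (intro mult_left_mono) auto
  moreover have "u mid = (L/2) * u' x1" using x1(3) mid ua by simp
  moreover have "V - u mid = (L/2) * u' x2" using x2(3) mid unfolding V_def by simp
  ultimately have umid: "u mid \<ge> V/2" by linarith
  obtain x3 where x3: "mid < x3" "x3 < c" "phi c - phi mid = (c - mid) * (- (x3 powr (M - 1) * \<bar>u x3\<bar> powr (p - 1) * u x3))"
  proof -
    have "\<And>x. mid \<le> x \<Longrightarrow> x \<le> c \<Longrightarrow> (phi has_real_derivative - (x powr (M - 1) * \<bar>u x\<bar> powr (p - 1) * u x)) (at x)"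
      using phider mid a by auto
    thus ?thesis using that MVT2[of mid c phi "\<lambda>r. - (r powr (M - 1) * \<bar>u r\<bar> powr (p - 1) * u r)", OF mid(2)] by blast
  qed
  have ux3: "u x3 \<ge> V/2" using uinc[of mid x3] x3 mid umid by simp
  have "\<bar>u x3\<bar> powr (p - 1) * u x3 = u x3 powr p" using ux3 V powr_pm1_mult[of "u x3" p] p1 by simp
  hence phimid: "phi mid = (L/2) * (x3 powr (M - 1) * u x3 powr p)" using x3(3) phic mid by simp
  have "x3 powr (M-1) \<ge> mid powr (M-1)" using x3 mid a M2 by (intro powr_mono2) auto
  moreover have "u x3 powr p \<ge> (V/2) powr p" using ux3 V p1 by (intro powr_mono2) auto
  ultimately have "x3 powr (M - 1) * u x3 powr p \<ge> mid powr (M-1) * (V/2) powr p"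
    using V by (intro mult_mono) auto
  hence "phi mid \<ge> (L/2) * (mid powr (M-1) * (V/2) powr p)" using phimid L by simp
  hence u'mid: "u' mid \<ge> (L/2) * (V/2) powr p"
    using u'eq[of mid] mid a by (simp add: le_divide_eq mult.commute mult.left_commute)
  have "u mid = (L/2) * u' x1" using x1(3) ua mid by simp
  also have "\<dots> \<ge> (L/2) * u' mid" using u'dec[of x1 mid] x1 mid L by (intro mult_left_mono) auto
  moreover have "(L/2) * u' mid \<ge> (L/2) * ((L/2) * (V/2) powr p)" using u'mid L by (intro mult_left_mono) auto
  ultimately have "u mid \<ge> (L/2) * ((L/2) * (V/2) powr p)" by linarith
  moreover have "u mid \<le> V" using uinc[of mid c] mid unfolding V_def by simp
  ultimately have Lc: "(L/2) * ((L/2) * (V/2) powr p) \<le> V" by simp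
  obtain x4 where x4: "a < x4" "x4 < c" "u c - u a = (c - a) * u' x4"
    using MVT2[of a c u u'] derx a by auto
  have "V \<le> L * u' a" using x4 ua u'dec[of a x4] L unfolding V_def L_def
    by (simp add: mult_left_mono)
  have u'a1: "u' a \<ge> (L/2) * (V/2) powr p" using u'dec[of a mid] mid u'mid by simp
  have Vp: "(V/2) powr p = V powr (p-1) * V / 2 powr p"
    using V powr_pm1_mult[of V p] p1 by (simp add: powr_divide)
  have Vp1: "V powr (p-1) > 0" using V by simp
  define T where "T = c\<^sup>2 * V powr (p-1)"
  show ?thesis
  proof (cases "T \<le> 2 powr (p+4)")
    case True thus ?thesis by (simp add: AA_def T_def V_def)
  next
    case False
    hence Tbig: "T > 2 powr (p+4)" by simp
    have "L\<^sup>2 * V powr (p-1) * V / (4 * 2 powr p) \<le> V" using Lc Vp by (simp add: power2_eq_square field_simps)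
    hence LV: "L\<^sup>2 * V powr (p-1) \<le> 4 * 2 powr p" using V by (simp add: field_simps)
    have "(2::real) powr (p+4) = 16 * 2 powr p" by (simp add: powr_add)
    hence "c\<^sup>2 * V powr (p-1) > 4 * (L\<^sup>2 * V powr (p-1))" using Tbig LV unfolding T_def by linarith
    hence "c\<^sup>2 > 4 * L\<^sup>2" using Vp1 by (simp add: mult.assoc mult.commute[of _ "V powr (p-1)"])
    hence "c\<^sup>2 > (2*L)\<^sup>2" by (simp add: power_mult_distrib)
    hence "c > 2*L" using power_less_imp_less_base[of "2*L" 2 c] a by auto
    hence ac: "a > c/2" unfolding L_def by simp
    have "0 < L * u' a" using \<open>V \<le> L * u' a\<close> V by linarith
    hence u'apos: "u' a > 0" using L by (simp add: zero_less_mult_iff)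
    have "u' a * u' a \<ge> (L/2) * (V/2) powr p * (V / L)"
    proof -
      have "V / L \<le> u' a" using \<open>V \<le> L * u' a\<close> L by (simp add: divide_le_eq mult.commute)
      thus ?thesis using u'a1 V L u'apos by (intro mult_mono) auto
    qed
    hence u'a2: "(u' a)\<^sup>2 \<ge> V * (V/2) powr p / 2" using L by (simp add: power2_eq_square field_simps)
    define g1 where "g1 = 4/(p-1) + 2"
    have "4/(p-1) > 0" using p1 by simp
    hence g1pos: "g1 > 0" unfolding g1_def by linarith
    have "(a powr (2/(p-1)+1) * \<bar>u' a\<bar>)\<^sup>2 = a powr g1 * (u' a)\<^sup>2"
    proof -
      have "(a powr (2/(p-1)+1))\<^sup>2 = a powr ((2/(p-1)+1) + (2/(p-1)+1))"
        by (simp add: power2_eq_square powr_add[symmetric])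
      also have "(2/(p-1)+1) + (2/(p-1)+1) = g1" by (simp add: g1_def)
      finally have "(a powr (2/(p-1)+1))\<^sup>2 = a powr g1" .
      thus ?thesis by (simp add: power_mult_distrib)
    qed
    also have "\<dots> \<ge> (c/2) powr g1 * (V * (V/2) powr p / 2)"
      using u'a2 ac a g1pos V by (intro mult_mono powr_mono2) auto
    moreover have "(a powr (2/(p-1)+1) * \<bar>u' a\<bar>)\<^sup>2 \<le> D\<^sup>2"
      using Da by (intro power_mono) auto
    ultimately have D2: "D\<^sup>2 \<ge> (c/2) powr g1 * (V * (V/2) powr p / 2)" by linarith
    have "(c/2) powr g1 * (V * (V/2) powr p / 2) = c powr g1 * V powr (p+1) / 2 powr (g1 + p + 1)"
      using V a by (simp add: powr_divide powr_add field_simps powr_pm1_mult)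
    hence "c powr g1 * V powr (p+1) / 2 powr (g1 + p + 1) \<le> D\<^sup>2" using D2 by simp
    hence "c powr g1 * V powr (p+1) \<le> D\<^sup>2 * 2 powr (g1 + p + 1)" by (simp add: divide_le_eq)
    moreover have "g1 + p + 1 = 4/(p-1) + p + 3" by (simp add: g1_def)
    ultimately have D3: "c powr g1 * V powr (p+1) \<le> 2 powr (4/(p-1) + p + 3) * D\<^sup>2"
      by (simp add: mult.commute)
    have "T powr ((p+1)/(p-1)) = c powr g1 * V powr (p+1)"
    proof -
      have "T powr ((p+1)/(p-1)) = (c\<^sup>2) powr ((p+1)/(p-1)) * (V powr (p-1)) powr ((p+1)/(p-1))"
        unfolding T_def by (simp add: powr_mult)
      also have "(c\<^sup>2) powr ((p+1)/(p-1)) = c powr g1"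
      proof -
        have "(c\<^sup>2) powr ((p+1)/(p-1)) = (c powr 2) powr ((p+1)/(p-1))" using a by simp
        also have "\<dots> = c powr (2 * ((p+1)/(p-1)))" by (simp add: powr_powr)
        also have "2 * ((p+1)/(p-1)) = g1" using p1 by (simp add: g1_def field_simps)
        finally show ?thesis .
      qed
      also have "(V powr (p-1)) powr ((p+1)/(p-1)) = V powr (p+1)" using p1 by (simp add: powr_powr)
      finally show ?thesis .
    qed
    hence "T powr ((p+1)/(p-1)) \<le> 2 powr (4/(p-1) + p + 3) * D\<^sup>2" using D3 by simp
    hence "(T powr ((p+1)/(p-1))) powr ((p-1)/(p+1)) \<le> (2 powr (4/(p-1) + p + 3) * D\<^sup>2) powr ((p-1)/(p+1))"
      using p1 by (intro powr_mono2) auto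
    moreover have "(T powr ((p+1)/(p-1))) powr ((p-1)/(p+1)) = T"
      using p1 Vp1 a by (simp add: powr_powr T_def)
    ultimately have "T \<le> (2 powr (4/(p-1) + p + 3) * D\<^sup>2) powr ((p-1)/(p+1))" by simp
    thus ?thesis by (simp add: AA_def T_def V_def)
  qed
qed

end


definition Bz :: "real \<Rightarrow> real \<Rightarrow> real \<Rightarrow> real" where
  "Bz M p D = max ((2 * 2 powr (2/M)) * AA p D) (8*M/(p-1))"

definition dnext :: "real \<Rightarrow> real \<Rightarrow> real \<Rightarrow> real" where
  "dnext M p D = Bz M p D powr (p/(p-1)) / (M - 2*p/(p-1))"

lemma AA_nonneg: "AA p D \<ge> 0" by (simp add: AA_def le_max_iff_disj)

context zsol begin

lemma Bz_ge: "Bz M p D \<ge> 8*M/(p-1)" "Bz M p D \<ge> (2 * 2 powr (2/M)) * AA p D" "Bz M p D > 0"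
proof -
  show "Bz M p D \<ge> 8*M/(p-1)" "Bz M p D \<ge> (2 * 2 powr (2/M)) * AA p D" by (auto simp: Bz_def)
  have "8*M/(p-1) > 0" using M2 p1 by simp
  thus "Bz M p D > 0" using \<open>Bz M p D \<ge> 8*M/(p-1)\<close> by linarith
qed

lemma zone_first:
  assumes d0: "(u has_real_derivative u' 0) (at 0 within {0..1})" and u'0: "u' 0 = 0"
  and u0: "u 0 > 0" and u1: "u 1 = 0"
  shows "\<exists>b. 0 < b \<and> b \<le> 1 \<and> u b = 0 \<and> (\<forall>r. 0 \<le> r \<and> r < b \<longrightarrow> u r > 0)
     \<and> (\<forall>r. 0 \<le> r \<and> r \<le> b \<longrightarrow> r\<^sup>2 * \<bar>u r\<bar> powr (p-1) \<le> Bz M p D)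
     \<and> (b < 1 \<longrightarrow> u' b < 0 \<and> b powr (2/(p-1)+1) * \<bar>u' b\<bar> \<le> dnext M p D)"
proof -
  obtain b where b: "0 < b" "b \<le> 1" "u b = 0" "\<forall>r. 0 \<le> r \<and> r < b \<longrightarrow> u r > 0"
    using first_zero[of 0 u] u_cont[of 0 1] u0 u1 by auto
  have phineg: "\<forall>x. 0 < x \<and> x < b \<longrightarrow> phi x \<le> 0"
  proof (intro allI impI, rule ccontr)
    fix x assume x: "0 < x \<and> x < b" and "\<not> phi x \<le> 0"
    hence px: "phi x > 0" by simp
    have "\<forall>s. 0 < s \<and> s < x \<longrightarrow> 1 * phi s \<ge> phi x"
    proof (intro allI impI)
      fix s assume s: "0 < s \<and> s < x"
      have unn: "\<And>r. 0 < r \<Longrightarrow> r < b \<Longrightarrow> u r \<ge> 0" using b(4) by (simp add: less_imp_le)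
      have "phi x \<le> phi s" by (rule phi_dec) (use s x b unn in auto)
      thus "1 * phi s \<ge> phi x" by simp
    qed
    thus False using phi_not_away[OF d0 u'0, of x "phi x" 1] x b px by auto
  qed
  have lim: "\<forall>\<eta>>0. \<exists>s. 0 \<le> s \<and> s < b \<and> 0 < s \<and> - phi s < \<eta>"
  proof (intro allI impI)
    fix \<eta> :: real assume "\<eta> > 0"
    hence "\<not> (\<forall>s. 0 < s \<and> s < b \<longrightarrow> (-1) * phi s \<ge> \<eta>)"
      using phi_not_away[OF d0 u'0, of b \<eta> "-1"] b by auto
    thus "\<exists>s. 0 \<le> s \<and> s < b \<and> 0 < s \<and> - phi s < \<eta>" by force
  qed
  have B2: "Bz M p D \<ge> (2 * 2 powr (2/M)) * (0\<^sup>2 * u 0 powr (p-1))" using Bz_ge(3)[of D] by simp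
  show ?thesis
  proof (intro exI conjI allI impI)
    show "0 < b" "b \<le> 1" "u b = 0" using b by auto
    fix r assume "0 \<le> r \<and> r < b" thus "u r > 0" using b by auto
  next
    fix r assume r: "0 \<le> r \<and> r \<le> b"
    show "r\<^sup>2 * \<bar>u r\<bar> powr (p-1) \<le> Bz M p D"
      using desc_bound[of 0 b "Bz M p D" r] b phineg Bz_ge B2 r by auto
  next
    assume b1: "b < 1"
    have "phi b < 0" using desc_D4(1)[of 0 b "Bz M p D"] b b1 phineg Bz_ge B2 lim by auto
    thus "u' b < 0" using u'_phi[of b] b by (simp add: divide_neg_pos)
    show "b powr (2/(p-1)+1) * \<bar>u' b\<bar> \<le> dnext M p D"
      using desc_D4(2)[of 0 b "Bz M p D"] b b1 phineg Bz_ge B2 lim by (auto simp: dnext_def)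
  qed
qed

lemma zone_next:
  assumes a: "0 < a" "a < 1" and ua: "u a = 0" and u'a: "u' a > 0" and u1: "u 1 = 0"
  and Da: "a powr (2/(p-1)+1) * \<bar>u' a\<bar> \<le> D"
  shows "\<exists>b. a < b \<and> b \<le> 1 \<and> u b = 0 \<and> (\<forall>r. a < r \<and> r < b \<longrightarrow> u r > 0)
     \<and> (\<forall>r. a \<le> r \<and> r \<le> b \<longrightarrow> r\<^sup>2 * \<bar>u r\<bar> powr (p-1) \<le> Bz M p D)
     \<and> (b < 1 \<longrightarrow> u' b < 0 \<and> b powr (2/(p-1)+1) * \<bar>u' b\<bar> \<le> dnext M p D)"
proof -
  obtain d where d: "d > 0" "\<forall>h>0. h < d \<longrightarrow> u a < u (a + h)"
    using DERIV_pos_inc_right[OF der[OF a] u'a] by blast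
  define mm where "mm = min d (1 - a)"
  have m1: "mm \<le> 1 - a" "mm \<le> d" "mm > 0" using a d by (auto simp: mm_def)
  define x0 where "x0 = a + mm / 2"
  have x01: "a < x0" unfolding x0_def using m1 by linarith
  have x02: "x0 < 1" unfolding x0_def using m1 by linarith
  have x03: "x0 - a < d" unfolding x0_def using m1 by linarith
  note x0 = x01 x02 x03
  have ux0: "u x0 > 0" using d(2)[rule_format, of "x0 - a"] x0 ua by auto
  obtain b where b: "x0 < b" "b \<le> 1" "u b = 0" "\<forall>r. x0 \<le> r \<and> r < b \<longrightarrow> u r > 0"
    using first_zero[of x0 u] u_cont[of x0 1] ux0 u1 x0 a by auto
  have upos: "\<forall>r. a < r \<and> r < b \<longrightarrow> u r > 0"
  proof (intro allI impI)
    fix r assume r: "a < r \<and> r < b"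
    show "u r > 0"
    proof (cases "r < x0")
      case True thus ?thesis using d(2)[rule_format, of "r - a"] r x0 ua by auto
    next
      case False thus ?thesis using b r by auto
    qed
  qed
  obtain c where c: "c \<in> {a..b}" "\<forall>y\<in>{a..b}. u y \<le> u c"
    using continuous_attains_sup[of "{a..b}" u] u_cont[of a b] a b x0 by auto
  have "u c \<ge> u x0" using c x0 b by auto
  hence uc: "u c > 0" using ux0 by simp
  have ca: "a < c" using c uc ua by (cases "c = a") auto
  have cb: "c < b" using c uc b by (cases "c = b") auto
  have u'c: "u' c = 0"
  proof (rule DERIV_local_max[OF der[of c]])
    show "0 < c" "c < 1" using ca cb a b by auto
    show "0 < min (c - a) (b - c)" using ca cb by simp
    show "\<forall>y. \<bar>c - y\<bar> < min (c - a) (b - c) \<longrightarrow> u y \<le> u c"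
    proof (intro allI impI)
      fix y assume "\<bar>c - y\<bar> < min (c - a) (b - c)"
      hence "y \<in> {a..b}" by (auto simp: abs_if split: if_splits)
      thus "u y \<le> u c" using c by auto
    qed
  qed
  have phic: "phi c = 0" using u'c by (simp add: phi_def)
  have phineg: "\<forall>x. c < x \<and> x < b \<longrightarrow> phi x \<le> 0"
  proof (intro allI impI)
    fix x assume x: "c < x \<and> x < b"
    have "phi x < phi c" by (rule phi_strict_dec) (use x ca cb a b upos in auto)
    thus "phi x \<le> 0" using phic by simp
  qed
  have Tc: "c\<^sup>2 * u c powr (p-1) \<le> AA p D"
    by (rule asc_bound[OF a(1) ca _ ua _ phic Da]) (use cb b upos in auto)
  have B2: "Bz M p D \<ge> (2 * 2 powr (2/M)) * (c\<^sup>2 * u c powr (p-1))"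
    using Bz_ge(2)[of D] Tc by (smt (verit) mult_left_mono powr_ge_zero)
  have lim: "\<forall>\<eta>>0. \<exists>s. c \<le> s \<and> s < b \<and> 0 < s \<and> - phi s < \<eta>"
    using phic cb ca a by auto
  have upos2: "\<forall>x. c \<le> x \<and> x < b \<longrightarrow> u x > 0" using upos ca by auto
  show ?thesis
  proof (intro exI conjI allI impI)
    show "a < b" "b \<le> 1" "u b = 0" using b x0 by auto
    fix r assume "a < r \<and> r < b" thus "u r > 0" using upos by auto
  next
    fix r assume r: "a \<le> r \<and> r \<le> b"
    show "r\<^sup>2 * \<bar>u r\<bar> powr (p-1) \<le> Bz M p D"
    proof (cases "r \<le> c")
      case False
      thus ?thesis using desc_bound[of c b "Bz M p D" r] ca cb a b upos2 phineg Bz_ge B2 r by auto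
    next
      case True
      have ur: "u r \<ge> 0" using upos[rule_format, of r] ua r True cb by (cases "r = a") auto
      have "u r \<le> u c" using c r True by auto
      hence "u r powr (p-1) \<le> u c powr (p-1)" using ur p1 by (intro powr_mono2) auto
      moreover have "r\<^sup>2 \<le> c\<^sup>2" using r True a by (intro power_mono) auto
      ultimately have "r\<^sup>2 * u r powr (p-1) \<le> c\<^sup>2 * u c powr (p-1)" by (intro mult_mono) auto
      also have "\<dots> \<le> AA p D" by (rule Tc)
      also have "AA p D \<le> (2 * 2 powr (2/M)) * AA p D"
      proof -
        have "(1::real) \<le> 2 powr (2/M)" using M2 by (intro ge_one_powr_ge_zero) auto
        thus ?thesis using AA_nonneg[of p D] by (intro mult_le_cancel_right1[THEN iffD2]) auto
      qed
      also have "\<dots> \<le> Bz M p D" by (rule Bz_ge(2))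
      finally show ?thesis using ur by simp
    qed
  next
    assume b1: "b < 1"
    have "phi b < 0" using desc_D4(1)[of c b "Bz M p D"] ca cb a b1 b upos2 phineg Bz_ge B2 lim by auto
    thus "u' b < 0" using u'_phi[of b] b x0 a by (simp add: divide_neg_pos)
    show "b powr (2/(p-1)+1) * \<bar>u' b\<bar> \<le> dnext M p D"
      using desc_D4(2)[of c b "Bz M p D"] ca cb a b1 b upos2 phineg Bz_ge B2 lim by (auto simp: dnext_def)
  qed
qed

end


fun dseq :: "real \<Rightarrow> nat \<Rightarrow> real \<Rightarrow> real" where
  "dseq M 0 p = 1"
| "dseq M (Suc k) p = dnext M p (dseq M k p)"

lemma Bz_pos: "M > 0 \<Longrightarrow> p > 1 \<Longrightarrow> Bz M p D > 0"
proof -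
  assume "M > 0" "p > 1"
  hence "8*M/(p-1) > 0" by simp
  thus "Bz M p D > 0" unfolding Bz_def by (simp add: less_max_iff_disj)
qed

lemma cont_Bz:
  assumes S: "\<forall>p\<in>S. p > 1" and M: "M > 0"
  and cD: "continuous_on S D" and Dpos: "\<forall>p\<in>S. D p > 0"
  shows "continuous_on S (\<lambda>p. Bz M p (D p))"
proof -
  have c1: "continuous_on S (\<lambda>p. AA p (D p))"
    unfolding AA_def using S Dpos
    by (intro continuous_intros cD) auto
  show ?thesis unfolding Bz_def using S M
    by (intro continuous_intros c1) auto
qed

lemma cont_dseq:
  assumes S: "\<forall>p\<in>S. p > 1 \<and> M - 2*p/(p-1) > 0" and M: "M > 0"
  shows "continuous_on S (dseq M k) \<and> (\<forall>p\<in>S. dseq M k p > 0)"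
proof (induction k)
  case 0 thus ?case by (simp add: continuous_on_const)
next
  case (Suc k)
  have cB: "continuous_on S (\<lambda>p. Bz M p (dseq M k p))"
    using cont_Bz[of S M "dseq M k"] Suc S M by auto
  have c: "continuous_on S (dseq M (Suc k))"
  proof -
    have "continuous_on S (\<lambda>p. Bz M p (dseq M k p) powr (p/(p-1)) / (M - 2*p/(p-1)))"
      using S M Bz_pos[OF M]
      by (intro continuous_intros cB) (auto simp: less_imp_neq[symmetric])
    thus ?thesis by (simp add: dnext_def[abs_def])
  qed
  moreover have "\<forall>p\<in>S. dseq M (Suc k) p > 0"
  proof
    fix p assume p: "p \<in> S"
    have "Bz M p (dseq M k p) > 0" using Bz_pos[OF M] S p by auto
    hence "Bz M p (dseq M k p) powr (p/(p-1)) > 0" by simp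
    moreover have "M - 2*p/(p-1) > 0" using S p by auto
    ultimately show "dseq M (Suc k) p > 0" by (simp add: dnext_def)
  qed
  ultimately show ?case by blast
qed



lemma ccs_below:
  fixes U :: "real set"
  assumes "x \<in> U" "x < hi" "hi \<notin> U" "y \<in> connected_component_set U x"
  shows "y < hi"
proof (rule ccontr)
  assume "\<not> y < hi"
  have "x \<in> connected_component_set U x" using assms(1) by (simp add: connected_component_refl)
  moreover have conn: "\<forall>a\<in>connected_component_set U x. \<forall>b\<in>connected_component_set U x. \<forall>z\<ge>a. z \<le> b \<longrightarrow> z \<in> connected_component_set U x"
    using connected_connected_component[of U x] unfolding connected_iff_interval .
  ultimately have "hi \<in> connected_component_set U x"
    using assms(2,4) \<open>\<not> y < hi\<close> by (meson less_imp_le not_less)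
  thus False using connected_component_subset assms(3) by blast
qed

lemma ccs_above:
  fixes U :: "real set"
  assumes "x \<in> U" "lo < x" "lo \<notin> U" "y \<in> connected_component_set U x"
  shows "lo < y"
proof (rule ccontr)
  assume "\<not> lo < y"
  have "x \<in> connected_component_set U x" using assms(1) by (simp add: connected_component_refl)
  moreover have conn: "\<forall>a\<in>connected_component_set U x. \<forall>b\<in>connected_component_set U x. \<forall>z\<ge>a. z \<le> b \<longrightarrow> z \<in> connected_component_set U x"
    using connected_connected_component[of U x] unfolding connected_iff_interval .
  ultimately have "lo \<in> connected_component_set U x"
    using assms(2,4) \<open>\<not> lo < y\<close> by (meson less_imp_le not_less)
  thus False using connected_component_subset assms(3) by blast
qed

lemma card_step:
  fixes U :: "real set"
  assumes fin: "finite (components U)" and U: "U \<subseteq> {0..<1}"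
  and z: "z < x" "x < b" "z \<notin> U" "b \<notin> U" "x \<in> U"
  shows "card {C \<in> components U. C \<subseteq> {0..<b}} \<ge> card {C \<in> components U. C \<subseteq> {0..<z}} + 1"
proof -
  let ?C = "connected_component_set U x"
  have Cc: "?C \<in> components U" unfolding components_def by (rule imageI[OF z(5)])
  have Csub: "?C \<subseteq> {0..<b}"
  proof
    fix y assume y: "y \<in> ?C"
    have "y < b" using ccs_below[OF z(5) z(2) z(4) y] .
    moreover have "y \<in> U" using y connected_component_subset by blast
    ultimately show "y \<in> {0..<b}" using U by auto
  qed
  have Cnot: "\<not> ?C \<subseteq> {0..<z}"
  proof
    assume sub: "?C \<subseteq> {0..<z}"
    have xC: "x \<in> ?C" using z(5) by (simp add: connected_component_refl)
    have "x \<in> {0..<z}" using subsetD[OF sub xC] .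
    thus False using z by simp
  qed
  have zb: "z \<le> b" using z by simp
  have "insert ?C {C \<in> components U. C \<subseteq> {0..<z}} \<subseteq> {C \<in> components U. C \<subseteq> {0..<b}}"
    using Cc Csub zb by fastforce
  moreover have "finite {C \<in> components U. C \<subseteq> {0..<b}}" using fin by simp
  ultimately have "card (insert ?C {C \<in> components U. C \<subseteq> {0..<z}}) \<le> card {C \<in> components U. C \<subseteq> {0..<b}}"
    by (rule card_mono[rotated])
  moreover have "card (insert ?C {C \<in> components U. C \<subseteq> {0..<z}}) = card {C \<in> components U. C \<subseteq> {0..<z}} + 1"
    using Cnot fin by simp
  ultimately show ?thesis by simp
qed

lemma card_first:
  fixes U :: "real set"
  assumes fin: "finite (components U)" and U: "U \<subseteq> {0..<1}"
  and z: "0 < b" "0 \<in> U" "b \<notin> U"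
  shows "card {C \<in> components U. C \<subseteq> {0..<b}} \<ge> 1"
proof -
  let ?C = "connected_component_set U 0"
  have Cc: "?C \<in> components U" unfolding components_def by (rule imageI[OF z(2)])
  have Csub: "?C \<subseteq> {0..<b}"
  proof
    fix y assume y: "y \<in> ?C"
    have "y < b" using ccs_below[OF z(2) z(1) z(3) y] .
    moreover have "y \<in> U" using y connected_component_subset by blast
    ultimately show "y \<in> {0..<b}" using U by auto
  qed
  have "finite {C \<in> components U. C \<subseteq> {0..<b}}" using fin by simp
  moreover have "?C \<in> {C \<in> components U. C \<subseteq> {0..<b}}" using Cc Csub by simp
  ultimately have "card {C \<in> components U. C \<subseteq> {0..<b}} > 0" using card_gt_0_iff by blast
  thus ?thesis by simp
qed



lemma per_p:
  fixes M p :: real and v :: "real \<Rightarrow> real" and m :: nat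
  assumes M2: "M > 2" and p1: "p > 1" and e1: "M - 2*p/(p-1) > 0"
  and rs: "radial_sol M p v" and nz: "nodal_zones v = m" and v0: "v 0 > 0" and m1: "m \<ge> 1"
  shows "\<forall>r\<in>{0..1}. r\<^sup>2 * \<bar>v r\<bar> powr (p-1) \<le> (\<Sum>j<m+1. Bz M p (dseq M j p))"
proof -
  obtain w where w: "\<forall>r\<in>{0..1}. (v has_real_derivative w r) (at r within {0..1})" "w 0 = 0" "v 1 = 0"
    "\<forall>r\<in>{0<..<1}. ((\<lambda>t. t powr (M-1) * w t) has_real_derivative - (r powr (M - 1) * \<bar>v r\<bar> powr (p - 1) * v r)) (at r)"
    using rs unfolding radial_sol_def by blast
  have der: "(v has_real_derivative w r) (at r)" if r: "0 < r" "r < 1" for r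
  proof -
    have "(v has_real_derivative w r) (at r within {0..1})" using w(1) r by auto
    thus ?thesis using at_within_Icc_at[OF r] by simp
  qed
  have cont: "continuous_on {0..1} v"
    using w(1) DERIV_continuous continuous_on_eq_continuous_within by blast
  interpret P: zsol M p v w
    by unfold_locales (use M2 p1 e1 der w(4) cont in auto)
  interpret N: zsol M p "\<lambda>r. - v r" "\<lambda>r. - w r"
  proof unfold_locales
    show "M > 2" "p > 1" "M - 2*p/(p-1) > 0" using M2 p1 e1 by auto
    fix r :: real assume r: "0 < r" "r < 1"
    show "((\<lambda>r. - v r) has_real_derivative - w r) (at r)" using der[OF r] by (rule DERIV_minus)
    have "((\<lambda>t. - (t powr (M-1) * w t)) has_real_derivative - (- (r powr (M - 1) * \<bar>v r\<bar> powr (p - 1) * v r))) (at r)"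
      using w(4) r by (intro DERIV_minus) auto
    thus "((\<lambda>t. t powr (M - 1) * - w t) has_real_derivative - (r powr (M - 1) * \<bar>- v r\<bar> powr (p - 1) * - v r)) (at r)"
      by simp
  next
    show "continuous_on {0..1} (\<lambda>r. - v r)" using cont by (intro continuous_intros)
  qed
  define U where "U = {r \<in> {0..<1}. v r \<noteq> 0}"
  have cardU: "card (components U) = m" using nz by (simp add: nodal_zones_def U_def)
  have fin: "finite (components U)" using cardU m1 card.infinite by force
  have Usub: "U \<subseteq> {0..<1}" by (auto simp: U_def)
  have notU: "\<And>z. v z = 0 \<Longrightarrow> z \<notin> U" by (simp add: U_def)
  have inU: "\<And>x. 0 \<le> x \<Longrightarrow> x < 1 \<Longrightarrow> v x \<noteq> 0 \<Longrightarrow> x \<in> U" by (simp add: U_def)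
  define T where "T r = r\<^sup>2 * \<bar>v r\<bar> powr (p-1)" for r
  define S where "S k = (\<Sum>j<k. Bz M p (dseq M j p))" for k
  have Bpos: "\<And>D. Bz M p D > 0" using Bz_pos M2 p1 by simp
  have SSuc: "\<And>k. S (Suc k) = S k + Bz M p (dseq M k p)" by (simp add: S_def)
  have Snn: "\<And>k. S k \<ge> 0" unfolding S_def using Bpos by (simp add: less_imp_le sum_nonneg)
  define Dv where "Dv z = z powr (2/(p-1)+1) * \<bar>w z\<bar>" for z
  define Q where "Q k \<longleftrightarrow> (\<forall>r\<in>{0..1}. T r \<le> S k) \<or> (\<exists>z. 0 < z \<and> z < 1 \<and> v z = 0 \<and> w z \<noteq> 0 \<and> Dv z \<le> dseq M k p
      \<and> (\<forall>r\<in>{0..z}. T r \<le> S k) \<and> k \<le> card {C \<in> components U. C \<subseteq> {0..<z}})" for k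
  have Q1: "Q 1"
  proof -
    have d0: "(v has_real_derivative w 0) (at 0 within {0..1})" using w(1) by auto
    obtain b where b: "0 < b" "b \<le> 1" "v b = 0" "\<forall>r. 0 \<le> r \<and> r < b \<longrightarrow> v r > 0"
      "\<forall>r. 0 \<le> r \<and> r \<le> b \<longrightarrow> r\<^sup>2 * \<bar>v r\<bar> powr (p-1) \<le> Bz M p (dseq M 0 p)"
      "b < 1 \<longrightarrow> w b < 0 \<and> b powr (2/(p-1)+1) * \<bar>w b\<bar> \<le> dnext M p (dseq M 0 p)"
      using P.zone_first[OF d0 w(2) v0 w(3), of "dseq M 0 p"] by blast
    have S1: "S 1 = Bz M p (dseq M 0 p)" by (simp add: S_def)
    show ?thesis
    proof (cases "b = 1")
      case True
      thus ?thesis unfolding Q_def T_def using b(5) S1 by auto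
    next
      case False
      hence b1: "b < 1" using b by simp
      have "1 \<le> card {C \<in> components U. C \<subseteq> {0..<b}}"
        by (rule card_first[OF fin Usub b(1)]) (use inU v0 notU b in auto)
      thus ?thesis unfolding Q_def using b b1 S1 by (auto simp: T_def Dv_def)
    qed
  qed
  have Qstep: "Q (Suc k)" if Qk: "Q k" for k
  proof (cases "\<forall>r\<in>{0..1}. T r \<le> S k")
    case True
    thus ?thesis unfolding Q_def using SSuc[of k] Bpos[of "dseq M k p"] by (smt (verit))
  next
    case False
    then obtain z where z: "0 < z" "z < 1" "v z = 0" "w z \<noteq> 0" "Dv z \<le> dseq M k p"
      "\<forall>r\<in>{0..z}. T r \<le> S k" "k \<le> card {C \<in> components U. C \<subseteq> {0..<z}}"
      using Qk unfolding Q_def by blast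
    have "\<exists>b. z < b \<and> b \<le> 1 \<and> v b = 0 \<and> (\<forall>r. z < r \<and> r < b \<longrightarrow> v r \<noteq> 0)
       \<and> (\<forall>r. z \<le> r \<and> r \<le> b \<longrightarrow> T r \<le> Bz M p (dseq M k p))
       \<and> (b < 1 \<longrightarrow> w b \<noteq> 0 \<and> Dv b \<le> dseq M (Suc k) p)"
    proof (cases "w z > 0")
      case True
      obtain b where b: "z < b" "b \<le> 1" "v b = 0" "\<forall>r. z < r \<and> r < b \<longrightarrow> v r > 0"
        "\<forall>r. z \<le> r \<and> r \<le> b \<longrightarrow> r\<^sup>2 * \<bar>v r\<bar> powr (p-1) \<le> Bz M p (dseq M k p)"
        "b < 1 \<longrightarrow> w b < 0 \<and> b powr (2/(p-1)+1) * \<bar>w b\<bar> \<le> dnext M p (dseq M k p)"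
        using P.zone_next[OF z(1) z(2) z(3) True w(3), of "dseq M k p"] z(5) unfolding Dv_def by blast
      show ?thesis
        by (rule exI[of _ b]) (use b in \<open>auto simp: T_def Dv_def\<close>)
    next
      case False
      hence wz: "- w z > 0" using z(4) by simp
      obtain b where b: "z < b" "b \<le> 1" "- v b = 0" "\<forall>r. z < r \<and> r < b \<longrightarrow> - v r > 0"
        "\<forall>r. z \<le> r \<and> r \<le> b \<longrightarrow> r\<^sup>2 * \<bar>- v r\<bar> powr (p-1) \<le> Bz M p (dseq M k p)"
        "b < 1 \<longrightarrow> - w b < 0 \<and> b powr (2/(p-1)+1) * \<bar>- w b\<bar> \<le> dnext M p (dseq M k p)"
        using N.zone_next[of z "dseq M k p"] z(1) z(2) z(3) wz w(3) z(5) unfolding Dv_def by auto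
      show ?thesis
        by (rule exI[of _ b]) (use b in \<open>auto simp: T_def Dv_def\<close>)
    qed
    then obtain b where b: "z < b" "b \<le> 1" "v b = 0" "\<forall>r. z < r \<and> r < b \<longrightarrow> v r \<noteq> 0"
       "\<forall>r. z \<le> r \<and> r \<le> b \<longrightarrow> T r \<le> Bz M p (dseq M k p)"
       "b < 1 \<longrightarrow> w b \<noteq> 0 \<and> Dv b \<le> dseq M (Suc k) p" by blast
    have Tb: "\<forall>r\<in>{0..b}. T r \<le> S (Suc k)"
    proof
      fix r assume r: "r \<in> {0..b}"
      show "T r \<le> S (Suc k)"
      proof (cases "r \<le> z")
        case True
        hence "T r \<le> S k" using z(6) r by auto
        thus ?thesis using SSuc[of k] Bpos[of "dseq M k p"] by linarith
      next
        case False
        hence "T r \<le> Bz M p (dseq M k p)" using b(5) r by auto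
        thus ?thesis using SSuc[of k] Snn[of k] by linarith
      qed
    qed
    define x where "x = (z + b) / 2"
    have x: "z < x" "x < b" using b(1) by (auto simp: x_def)
    have xU: "x \<in> U" using inU[of x] x z b(2) b(4) by auto
    have "card {C \<in> components U. C \<subseteq> {0..<z}} + 1 \<le> card {C \<in> components U. C \<subseteq> {0..<b}}"
      by (rule card_step[OF fin Usub x(1) x(2) notU[OF z(3)] notU[OF b(3)] xU])
    hence cardb: "Suc k \<le> card {C \<in> components U. C \<subseteq> {0..<b}}" using z(7) by simp
    show ?thesis
    proof (cases "b = 1")
      case True
      thus ?thesis unfolding Q_def using Tb by auto
    next
      case False
      hence b1: "b < 1" using b by simp
      show ?thesis unfolding Q_def
        by (rule disjI2, rule exI[of _ b]) (use b b1 Tb cardb z(1) in auto)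
    qed
  qed
  have Qall: "Q (Suc k)" for k
    by (induction k) (use Q1 Qstep in auto)
  have "Q (m+1)" using Qall[of m] by simp
  moreover have "\<not> (\<exists>z. 0 < z \<and> z < 1 \<and> v z = 0 \<and> w z \<noteq> 0 \<and> Dv z \<le> dseq M (m+1) p
      \<and> (\<forall>r\<in>{0..z}. T r \<le> S (m+1)) \<and> m+1 \<le> card {C \<in> components U. C \<subseteq> {0..<z}})"
  proof
    assume "\<exists>z. 0 < z \<and> z < 1 \<and> v z = 0 \<and> w z \<noteq> 0 \<and> Dv z \<le> dseq M (m+1) p
      \<and> (\<forall>r\<in>{0..z}. T r \<le> S (m+1)) \<and> m+1 \<le> card {C \<in> components U. C \<subseteq> {0..<z}}"
    then obtain z where "m+1 \<le> card {C \<in> components U. C \<subseteq> {0..<z}}" by blast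
    moreover have "card {C \<in> components U. C \<subseteq> {0..<z}} \<le> card (components U)"
      using fin by (intro card_mono) auto
    ultimately show False using cardU by simp
  qed
  ultimately have "\<forall>r\<in>{0..1}. T r \<le> S (m+1)" unfolding Q_def by blast
  thus ?thesis by (simp add: T_def S_def)
qed



theorem lemma2p13:
  fixes M :: real and m :: nat and v :: "real \<Rightarrow> real \<Rightarrow> real"
  assumes "M > 2" and "m \<ge> 1"
    and "\<forall>p. 1 < p \<and> p < pM M \<longrightarrow>
           radial_sol M p (v p) \<and> nodal_zones (v p) = m \<and> v p 0 > 0"
  shows "\<exists>C>0. \<exists>\<delta>>0. \<forall>p. pM M - \<delta> < p \<and> p < pM M \<longrightarrow>
           (\<forall>r\<in>{0..1}. 0 \<le> fp p (v p) r \<and> fp p (v p) r \<le> C)"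
proof -
  have M2: "M > 2" using assms(1) .
  define \<delta> where "\<delta> = 1/(M-2)"
  have dpos: "\<delta> > 0" using M2 by (simp add: \<delta>_def)
  have low: "pM M - \<delta> = (M+1)/(M-2)" by (simp add: pM_def \<delta>_def diff_divide_distrib[symmetric])
  define S where "S = {pM M - \<delta> .. pM M}"
  have Sp: "\<forall>p\<in>S. p > 1 \<and> M - 2*p/(p-1) > 0"
  proof
    fix p assume "p \<in> S"
    hence pge: "p \<ge> (M+1)/(M-2)" using low by (simp add: S_def)
    hence "p * (M-2) \<ge> M+1" using M2 by (simp add: field_simps)
    moreover have "(M+1)/(M-2) > 1" using M2 by (simp add: field_simps)
    ultimately have p1: "p > 1" using pge by linarith
    have "M * (p-1) > 2*p" using \<open>p * (M-2) \<ge> M+1\<close> by (simp add: algebra_simps)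
    hence "2*p/(p-1) < M" using p1 by (simp add: divide_less_eq mult.commute)
    thus "p > 1 \<and> M - 2*p/(p-1) > 0" using p1 by simp
  qed
  define F where "F p = p * (\<Sum>j<m+1. Bz M p (dseq M j p))" for p
  have Mpos: "M > 0" using M2 by simp
  have contF: "continuous_on S F"
  proof -
    have "\<And>j. continuous_on S (\<lambda>p. Bz M p (dseq M j p))"
      using cont_Bz[of S M] cont_dseq[OF Sp Mpos] Sp Mpos by blast
    thus ?thesis unfolding F_def[abs_def] by (intro continuous_intros) auto
  qed
  have Sne: "S \<noteq> {}" using dpos by (simp add: S_def)
  obtain pmax where pmax: "pmax \<in> S" "\<forall>y\<in>S. F y \<le> F pmax"
    using continuous_attains_sup[OF _ Sne contF] by (auto simp: S_def)
  define C where "C = max (F pmax) 1"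
  show ?thesis
  proof (intro exI conjI allI impI ballI)
    show "C > 0" by (simp add: C_def)
    show "\<delta> > 0" by (rule dpos)
    fix p r :: real assume p: "pM M - \<delta> < p \<and> p < pM M" and r: "r \<in> {0..1}"
    have pS: "p \<in> S" using p by (simp add: S_def)
    have p1: "p > 1" and e1: "M - 2*p/(p-1) > 0" using Sp pS by auto
    have sol: "radial_sol M p (v p)" "nodal_zones (v p) = m" "v p 0 > 0" using assms(3) p p1 by auto
    have T: "r\<^sup>2 * \<bar>v p r\<bar> powr (p-1) \<le> (\<Sum>j<m+1. Bz M p (dseq M j p))"
      using per_p[OF M2 p1 e1 sol assms(2)] r by blast
    show "0 \<le> fp p (v p) r" using p1 by (simp add: fp_def)
    have "fp p (v p) r = p * (r\<^sup>2 * \<bar>v p r\<bar> powr (p-1))" by (simp add: fp_def mult.assoc)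
    also have "\<dots> \<le> F p" unfolding F_def using T p1 by (intro mult_left_mono) auto
    also have "\<dots> \<le> F pmax" using pmax pS by auto
    also have "\<dots> \<le> C" by (simp add: C_def)
    finally show "fp p (v p) r \<le> C" .
  qed
qed


end
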